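(* Let $Y_1,\dots,Y_J\subset\mathbb{R}^M$ be nonempty cones and let $Y=Y_1+\dots+Y_J$ (Minkowski sum). Suppose $p\in\mathbb{R}^M$ supports $Y$ at $y^*\in Y$ and $y^*=\sum_{j=1}^J y_j$ with $y_j\in Y_j$ for each $j$. Let $C$ be the smallest convex cone containing $\{y_1,\dots,y_J\}$. Then $p$ supports $Y$ at every $\bar{y}\in C$.
   Context: A set $Y\subset\mathbb{R}^M$ is a cone if $y\in Y$ and $\alpha\ge 0$ imply $\alpha y\in Y$ (not necessarily convex). A vector $p$ supports a cone $Y$ at $y^*\in Y$ if $p\cdot y^*\ge p\cdot y$ for all $y\in Y$. The Minkowski sum is $Y_1+\dots+Y_J=\{\sum_j z_j: z_j\in Y_j\}$. The smallest convex cone containing $\{y_j\}$ is $\{\sum_j\alpha_j y_j:\alpha_j\ge0\}$. *)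

theory Defs
  imports "HOL-Analysis.Analysis"
begin

definition is_cone_set :: "(real ^ 'm) set \<Rightarrow> bool" where
  "is_cone_set Y \<longleftrightarrow> (\<forall>y\<in>Y. \<forall>\<alpha>::real. \<alpha> \<ge> 0 \<longrightarrow> \<alpha> *\<^sub>R y \<in> Y)"

definition supports :: "real ^ 'm \<Rightarrow> (real ^ 'm) set \<Rightarrow> real ^ 'm \<Rightarrow> bool" where
  "supports p Y ys \<longleftrightarrow> ys \<in> Y \<and> (\<forall>y\<in>Y. p \<bullet> ys \<ge> p \<bullet> y)"

text \<open>Minkowski sum Y_1 + ... + Y_J of a family indexed by j < J (0-based).\<close>
definition minkowski_sum :: "nat \<Rightarrow> (nat \<Rightarrow> (real ^ 'm) set) \<Rightarrow> (real ^ 'm) set" where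
  "minkowski_sum J Ys = {\<Sum>j<J. z j | z. \<forall>j<J. z j \<in> Ys j}"

text \<open>Smallest convex cone containing y_1,...,y_J.\<close>
definition gen_convex_cone :: "nat \<Rightarrow> (nat \<Rightarrow> real ^ 'm) \<Rightarrow> (real ^ 'm) set" where
  "gen_convex_cone J ys = {\<Sum>j<J. \<alpha> j *\<^sub>R ys j | \<alpha>. \<forall>j<J. \<alpha> j \<ge> 0}"

end

theory Submission
  imports Defs
begin

theorem lemma4:
  fixes J :: nat and Ys :: "nat \<Rightarrow> (real ^ 'm) set"
    and p ystar :: "real ^ 'm" and ys :: "nat \<Rightarrow> real ^ 'm"
  assumes cones: "\<And>j. j < J \<Longrightarrow> is_cone_set (Ys j)"
    and nonempty: "\<And>j. j < J \<Longrightarrow> Ys j \<noteq> {}"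
    and supp: "supports p (minkowski_sum J Ys) ystar"
    and decomp: "ystar = (\<Sum>j<J. ys j)"
    and mem: "\<And>j. j < J \<Longrightarrow> ys j \<in> Ys j"
  shows "\<forall>ybar \<in> gen_convex_cone J ys. supports p (minkowski_sum J Ys) ybar"
proof -
  let ?Y = "minkowski_sum J Ys"
  have sc: "a *\<^sub>R ys j \<in> Ys j" if "j < J" "a \<ge> 0" for j a
    using cones[OF that(1)] mem[OF that(1)] that(2) unfolding is_cone_set_def by blast
  have z0: "0 \<in> Ys j" if "j < J" for j
    using sc[OF that, of 0] by simp
  have le: "p \<bullet> y \<le> p \<bullet> ystar" if "y \<in> ?Y" for y
    using supp that unfolding supports_def by blast
  have inY: "(\<Sum>j<J. z j) \<in> ?Y" if "\<And>j. j < J \<Longrightarrow> z j \<in> Ys j" for z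
    unfolding minkowski_sum_def using that by blast
  have "(\<Sum>j<J. (0::real^'m)) \<in> ?Y" by (rule inY) (simp add: z0)
  hence ge0: "0 \<le> p \<bullet> ystar" using le by fastforce
  have "(\<Sum>j<J. 2 *\<^sub>R ys j) \<in> ?Y" by (rule inY) (simp add: sc)
  hence "p \<bullet> (2 *\<^sub>R ystar) \<le> p \<bullet> ystar"
    using le decomp by (simp add: scaleR_sum_right)
  hence ys0: "p \<bullet> ystar = 0" using ge0 by (simp add: inner_scaleR_right)
  have pj: "p \<bullet> ys j = 0" if j: "j < J" for j
  proof -
    have "(\<Sum>i<J. if i = j then ys j else 0) \<in> ?Y"
      by (rule inY) (auto simp: z0 mem)
    hence a: "p \<bullet> ys j \<le> 0" using le ys0 j by simp
    have "(\<Sum>i<J. if i = j then 0 else ys i) \<in> ?Y"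
      by (rule inY) (auto simp: z0 mem)
    moreover have "(\<Sum>i<J. if i = j then 0 else ys i) = ystar - ys j"
    proof -
      have "(\<Sum>i<J. if i = j then 0 else ys i) = (\<Sum>i<J. ys i - (if i = j then ys j else 0))"
        by (rule sum.cong) auto
      also have "\<dots> = ystar - ys j" using j by (simp add: sum_subtractf decomp)
      finally show ?thesis .
    qed
    ultimately have "p \<bullet> (ystar - ys j) \<le> 0" using le ys0 by fastforce
    hence "0 \<le> p \<bullet> ys j" using ys0 by (simp add: inner_diff_right)
    with a show ?thesis by simp
  qed
  show ?thesis
  proof
    fix ybar assume "ybar \<in> gen_convex_cone J ys"
    then obtain \<alpha> where al: "\<forall>j<J. \<alpha> j \<ge> 0" and yb: "ybar = (\<Sum>j<J. \<alpha> j *\<^sub>R ys j)"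
      unfolding gen_convex_cone_def by blast
    have "ybar \<in> ?Y" unfolding yb by (rule inY) (simp add: sc al)
    moreover have "p \<bullet> ybar = 0" unfolding yb by (simp add: inner_sum_right pj)
    ultimately show "supports p ?Y ybar"
      unfolding supports_def using le ys0 by simp
  qed
qed

end
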